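(* Let $G$ be a connected simple graph without bridges whose edge set is identified with $[d+1]$, let $B_1,\dots,B_n$ be the bases (spanning trees) of its graphic matroid, all of cardinality $k$, and let $P=\operatorname{tconv}(V)$ with $V=(-e_{B_1},\dots,-e_{B_n})$. For pairwise distinct $i_1,\dots,i_r\in[d+1]$ write $e_{i_1,\dots,i_r}$ for the point $-e_{[d+1]\setminus\{i_1,\dots,i_r\}}$ of $\mathbb{T}^d$ (and $e_\emptyset=\mathbf{0}$). Call a sequence $(i_1,\dots,i_{d-k+1})$ of pairwise distinct elements of $[d+1]$ valid if $B=[d+1]\setminus\{i_1,\dots,i_{d-k+1}\}$ is a basis. Then the maximal bounded cells of the tropical complex $\mathcal{C}_V$ all have dimension $d-k+1$, and they are exactly the sets $\operatorname{tconv}(\mathbf{0},e_{i_1},e_{i_1,i_2},\dots,e_{i_1,\dots,i_{d-k+1}})$ for valid sequences $(i_1,\dots,i_{d-k+1})$; here the last point equals the generator $-e_B$ with $B=[d+1]\setminus\{i_1,\dots,i_{d-k+1}\}$. Moreover, if $(T^{(0)}_1,\dots,T^{(0)}_{d+1})=\operatorname{type}_V(\mathbf{0})$, then the type $(T_1,\dots,T_{d+1})$ of the relative interior of this cell is given by $T_{i_1}=T^{(0)}_{i_1}$, $T_{i_l}=T^{(0)}_{i_l}\setminus(T^{(0)}_{i_1}\cup\cdots\cup T^{(0)}_{i_{l-1}})$ for $2\le l\le d-k+1$, and $T_j=T^{(0)}_j\setminus(T^{(0)}_{i_1}\cup\cdots\cup T^{(0)}_{i_{d-k+1}})$ for all $j\in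 B$.
   Context: Tropical arithmetic is min-plus; $\mathbb{T}^d=\mathbb{R}^{d+1}/\mathbb{R}(1,\dots,1)$; $\operatorname{tconv}\{v_1,\dots,v_n\}=\{\bigoplus_l\lambda_l\odot v_l:\lambda_l\in\mathbb{R}\}$; $e_J=\sum_{i\in J}e_i$. For $m\in[d+1]$ let $\bar S_m=\{\xi\in\mathbb{T}^d:\xi_m=\min_i\xi_i\}$. For $V=(v_1,\dots,v_n)$ and $x\in\mathbb{T}^d$, $\operatorname{type}_V(x)=(T_1,\dots,T_{d+1})$ with $T_m=\{l\in[n]:v_l\in x+\bar S_m\}$. The cells $\{x:\operatorname{type}_V(x)=\mathcal{T}\}$ are relatively open polyhedra whose closures form a polyhedral subdivision $\mathcal{C}_V$ of $\mathbb{T}^d$; the bounded cells are those closed cells which are bounded sets, and the maximal bounded cells are those maximal under inclusion among bounded cells. *)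

theory Defs
  imports "HOL-Analysis.Analysis"
begin

text \<open>Finite simple graphs with vertex set Vs and edges indexed by the finite type 'e
  (the edge set is identified with [d+1], d+1 = CARD('e)); ends e is the set of
  two endpoints of the edge e.\<close>

definition simple_graph :: "'v set \<Rightarrow> ('e::finite \<Rightarrow> 'v set) \<Rightarrow> bool" where
  "simple_graph Vs ends \<longleftrightarrow> finite Vs \<and> inj ends \<and>
     (\<forall>e. ends e \<subseteq> Vs \<and> card (ends e) = 2)"

definition adj :: "('e \<Rightarrow> 'v set) \<Rightarrow> 'e set \<Rightarrow> 'v \<Rightarrow> 'v \<Rightarrow> bool" where
  "adj ends F u w \<longleftrightarrow> (\<exists>e\<in>F. ends e = {u, w})"

definition connected_sub :: "'v set \<Rightarrow> ('e \<Rightarrow> 'v set) \<Rightarrow> 'e set \<Rightarrow> bool" where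
  "connected_sub Vs ends F \<longleftrightarrow> (\<forall>u\<in>Vs. \<forall>w\<in>Vs. (adj ends F)\<^sup>*\<^sup>* u w)"

definition graph_connected :: "'v set \<Rightarrow> ('e \<Rightarrow> 'v set) \<Rightarrow> bool" where
  "graph_connected Vs ends \<longleftrightarrow> connected_sub Vs ends UNIV"

definition is_bridge :: "'v set \<Rightarrow> ('e \<Rightarrow> 'v set) \<Rightarrow> 'e \<Rightarrow> bool" where
  "is_bridge Vs ends e \<longleftrightarrow> \<not> connected_sub Vs ends (UNIV - {e})"

definition acyclic_edges :: "('e \<Rightarrow> 'v set) \<Rightarrow> 'e set \<Rightarrow> bool" where
  "acyclic_edges ends F \<longleftrightarrow>
     (\<forall>e\<in>F. \<forall>u w. ends e = {u, w} \<longrightarrow> \<not> (adj ends (F - {e}))\<^sup>*\<^sup>* u w)"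

definition spanning_tree :: "'v set \<Rightarrow> ('e \<Rightarrow> 'v set) \<Rightarrow> 'e set \<Rightarrow> bool" where
  "spanning_tree Vs ends F \<longleftrightarrow> connected_sub Vs ends F \<and> acyclic_edges ends F"

text \<open>Subsets of T^d are represented by their (translation-invariant) preimages in
  real^'e.  Negated indicator vector -e_J.\<close>
definition neg_ind :: "'e set \<Rightarrow> real^'e::finite" where
  "neg_ind J = (\<chi> i. if i \<in> J then -1 else 0)"

definition tconv :: "(real^'e::finite) set \<Rightarrow> (real^'e) set" where
  "tconv V = {x. \<exists>lam::real^'e \<Rightarrow> real. \<forall>i. x $ i = (MIN v\<in>V. lam v + v $ i)}"

definition Sbar :: "'e::finite \<Rightarrow> (real^'e) set" where
  "Sbar m = {\<xi>. \<forall>i. \<xi> $ m \<le> \<xi> $ i}"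

definition ttype :: "nat \<Rightarrow> (nat \<Rightarrow> real^'e::finite) \<Rightarrow> real^'e \<Rightarrow> 'e \<Rightarrow> nat set" where
  "ttype n v x m = {l \<in> {1..n}. v l \<in> (\<lambda>\<xi>. x + \<xi>) ` Sbar m}"

definition tcells :: "nat \<Rightarrow> (nat \<Rightarrow> real^'e::finite) \<Rightarrow> (real^'e) set set" where
  "tcells n v = {closure {x. ttype n v x = T} | T. \<exists>x. ttype n v x = T}"

definition tbounded :: "(real^'e::finite) set \<Rightarrow> bool" where
  "tbounded S \<longleftrightarrow> (\<exists>c. \<forall>x\<in>S. \<forall>i j. \<bar>x $ i - x $ j\<bar> \<le> c)"

definition bounded_cells :: "nat \<Rightarrow> (nat \<Rightarrow> real^'e::finite) \<Rightarrow> (real^'e) set set" where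
  "bounded_cells n v = {C \<in> tcells n v. tbounded C}"

definition max_bounded_cells :: "nat \<Rightarrow> (nat \<Rightarrow> real^'e::finite) \<Rightarrow> (real^'e) set set" where
  "max_bounded_cells n v =
     {C \<in> bounded_cells n v. \<forall>C'\<in>bounded_cells n v. C \<subseteq> C' \<longrightarrow> C' = C}"

definition tdim :: "(real^'e::finite) set \<Rightarrow> int" where
  "tdim S = aff_dim S - 1"

definition tpt :: "'e::finite list \<Rightarrow> real^'e" where
  "tpt is = neg_ind (UNIV - set is)"

end

theory Submission
  imports Defs
begin

lemma adj_sym: "adj ends F u w \<Longrightarrow> adj ends F w u"
  unfolding adj_def by (auto simp: insert_commute)

lemma conn_sym: "(adj ends F)\<^sup>*\<^sup>* u w \<Longrightarrow> (adj ends F)\<^sup>*\<^sup>* w u"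
proof (induction rule: rtranclp_induct)
  case base then show ?case by simp
next
  case (step y z)
  then show ?case using adj_sym[OF step(2)] by (meson converse_rtranclp_into_rtranclp)
qed

lemma adj_mono: "F \<subseteq> F' \<Longrightarrow> adj ends F u w \<Longrightarrow> adj ends F' u w"
  unfolding adj_def by auto

lemma conn_mono: "F \<subseteq> F' \<Longrightarrow> (adj ends F)\<^sup>*\<^sup>* u w \<Longrightarrow> (adj ends F')\<^sup>*\<^sup>* u w"
  by (metis (no_types, lifting) adj_mono mono_rtranclp)

lemma conn_insert:
  assumes "(adj ends (insert e F))\<^sup>*\<^sup>* a b" "ends e = {u, w}"
  shows "(adj ends F)\<^sup>*\<^sup>* a b \<or> ((adj ends F)\<^sup>*\<^sup>* a u \<and> (adj ends F)\<^sup>*\<^sup>* w b)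
         \<or> ((adj ends F)\<^sup>*\<^sup>* a w \<and> (adj ends F)\<^sup>*\<^sup>* u b)"
  using assms(1)
proof (induction rule: rtranclp_induct)
  case base then show ?case by simp
next
  case (step y z)
  from step(2) obtain f where f: "f \<in> insert e F" "ends f = {y, z}" unfolding adj_def by auto
  show ?case
  proof (cases "f \<in> F")
    case True
    then have "adj ends F y z" unfolding adj_def using f by auto
    then show ?thesis using step(3) by (meson rtranclp.rtrancl_into_rtrancl)
  next
    case False
    then have "f = e" using f by auto
    then have yz: "{y,z} = {u,w}" using f assms(2) by auto
    then have "(y = u \<and> z = w) \<or> (y = w \<and> z = u)" by (metis doubleton_eq_iff)
    then show ?thesis using step(3) by (auto intro: conn_sym)
  qed
qed

lemma conn_single:
  assumes "(adj ends {g})\<^sup>*\<^sup>* x y" "card (ends g) = 2"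
  shows "x = y \<or> ends g = {x, y}"
  using assms(1)
proof (induction rule: rtranclp_induct)
  case base then show ?case by simp
next
  case (step y z)
  then have gz: "ends g = {y, z}" unfolding adj_def by auto
  from step(3) show ?case
  proof
    assume "x = y" then show ?thesis using gz by simp
  next
    assume "ends g = {x, y}"
    then have "{x,y} = {y,z}" using gz by simp
    moreover have "y \<noteq> z" proof
      assume "y = z" then have "ends g = {y}" using gz by simp
      then show False using assms(2) by simp
    qed
    ultimately show ?thesis by (metis doubleton_eq_iff)
  qed
qed

lemma acyclic_insert:
  assumes ac: "acyclic_edges ends B" and eB: "e \<notin> B" and ee: "ends e = {u, w}"
    and nc: "\<not> (adj ends B)\<^sup>*\<^sup>* u w"
  shows "acyclic_edges ends (insert e B)"
  unfolding acyclic_edges_def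
proof (intro ballI allI impI notI)
  fix f a b
  assume f: "f \<in> insert e B" and fab: "ends f = {a, b}"
    and c: "(adj ends (insert e B - {f}))\<^sup>*\<^sup>* a b"
  show False
  proof (cases "f = e")
    case True
    then have "insert e B - {f} = B" using eB by auto
    then have "(adj ends B)\<^sup>*\<^sup>* a b" using c by simp
    moreover have "(a = u \<and> b = w) \<or> (a = w \<and> b = u)" using fab ee True by (metis doubleton_eq_iff)
    ultimately show False using nc conn_sym[of ends B a b] by auto
  next
    case False
    then have fB: "f \<in> B" using f by auto
    have eq: "insert e B - {f} = insert e (B - {f})" using False by auto
    have nab: "\<not> (adj ends (B - {f}))\<^sup>*\<^sup>* a b" using ac fB fab unfolding acyclic_edges_def by blast
    have adjab: "adj ends B a b" using fB fab unfolding adj_def by auto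
    have sub: "B - {f} \<subseteq> B" by auto
    from conn_insert[OF c[unfolded eq] ee] nab
    have "((adj ends (B - {f}))\<^sup>*\<^sup>* a u \<and> (adj ends (B - {f}))\<^sup>*\<^sup>* w b)
         \<or> ((adj ends (B - {f}))\<^sup>*\<^sup>* a w \<and> (adj ends (B - {f}))\<^sup>*\<^sup>* u b)" by blast
    then have "((adj ends B)\<^sup>*\<^sup>* a u \<and> (adj ends B)\<^sup>*\<^sup>* w b)
         \<or> ((adj ends B)\<^sup>*\<^sup>* a w \<and> (adj ends B)\<^sup>*\<^sup>* u b)"
      using conn_mono[OF sub, of ends a u] conn_mono[OF sub, of ends w b]
        conn_mono[OF sub, of ends a w] conn_mono[OF sub, of ends u b] by blast
    then show False
    proof
      assume h: "(adj ends B)\<^sup>*\<^sup>* a u \<and> (adj ends B)\<^sup>*\<^sup>* w b"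
      have "(adj ends B)\<^sup>*\<^sup>* u a" using h conn_sym[of ends B a u] by blast
      then have "(adj ends B)\<^sup>*\<^sup>* u b" using adjab by (meson rtranclp.rtrancl_into_rtrancl)
      moreover have "(adj ends B)\<^sup>*\<^sup>* b w" using h conn_sym[of ends B w b] by blast
      ultimately show False using nc by (meson rtranclp_trans)
    next
      assume h: "(adj ends B)\<^sup>*\<^sup>* a w \<and> (adj ends B)\<^sup>*\<^sup>* u b"
      have "(adj ends B)\<^sup>*\<^sup>* b a" using adj_sym[OF adjab] by (rule r_into_rtranclp)
      then have "(adj ends B)\<^sup>*\<^sup>* u a" using h by (meson rtranclp_trans)
      then have "(adj ends B)\<^sup>*\<^sup>* u w" using h by (meson rtranclp_trans)
      then show False using nc by simp
    qed
  qed
qed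

lemma exists_tree:
  fixes ends :: "'e::finite \<Rightarrow> 'v set"
  assumes IF: "I \<subseteq> F" and acI: "acyclic_edges ends I" and conF: "connected_sub Vs ends F"
  shows "\<exists>B. I \<subseteq> B \<and> B \<subseteq> F \<and> spanning_tree Vs ends B"
proof -
  let ?S = "{B. I \<subseteq> B \<and> B \<subseteq> F \<and> acyclic_edges ends B}"
  have finS: "finite ?S" by (rule finite)
  have "I \<in> ?S" using IF acI by blast
  then have ne: "?S \<noteq> {}" by blast
  obtain B where B: "B \<in> ?S" and Bmax: "\<And>B'. B' \<in> ?S \<Longrightarrow> card B' \<le> card B"
  proof -
    have fc: "finite (card ` ?S)" using finS by (rule finite_imageI)
    have "card ` ?S \<noteq> {}" by (metis image_is_empty ne)
    then have "Max (card ` ?S) \<in> card ` ?S" by (rule Max_in[OF fc])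
    then obtain B where B2: "Max (card ` ?S) = card B" and B1: "B \<in> ?S" by (rule imageE)
    have B3: "\<And>B'. B' \<in> ?S \<Longrightarrow> card B' \<le> Max (card ` ?S)" by (rule Max_ge[OF fc], rule imageI)
    show ?thesis
    proof (rule that)
      show "B \<in> ?S" by (rule B1)
    next
      fix B' assume "B' \<in> ?S" then show "card B' \<le> card B" using B2 B3 by simp
    qed
  qed
  have key: "(adj ends B)\<^sup>*\<^sup>* y z" if yz: "adj ends F y z" for y z
  proof -
    obtain e where e: "e \<in> F" "ends e = {y, z}" using yz unfolding adj_def by blast
    show ?thesis
    proof (cases "e \<in> B")
      case True
      then have "adj ends B y z" using e unfolding adj_def by blast
      then show ?thesis by (rule r_into_rtranclp)
    next
      case False
      show ?thesis
      proof (rule ccontr)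
        assume "\<not> (adj ends B)\<^sup>*\<^sup>* y z"
        then have "acyclic_edges ends (insert e B)"
          using acyclic_insert[of ends B e y z] B False e by auto
        then have "insert e B \<in> ?S" using B e by auto
        then have "card (insert e B) \<le> card B" using Bmax by blast
        then show False using False by simp
      qed
    qed
  qed
  have "connected_sub Vs ends B"
    unfolding connected_sub_def
  proof (intro ballI)
    fix u w assume "u \<in> Vs" "w \<in> Vs"
    then have "(adj ends F)\<^sup>*\<^sup>* u w" using conF unfolding connected_sub_def by auto
    then show "(adj ends B)\<^sup>*\<^sup>* u w"
      proof (induction rule: rtranclp_induct)
      case base then show ?case by simp
    next
      case (step y z) then show ?case using key[OF step(2)] by (meson rtranclp_trans)
    qed
  qed
  then show ?thesis using B unfolding spanning_tree_def by blast
qed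

locale grph =
  fixes Vs :: "'v set" and ends :: "'e::finite \<Rightarrow> 'v set"
  assumes sg: "simple_graph Vs ends"
    and gc: "graph_connected Vs ends"
    and nb: "\<forall>e. \<not> is_bridge Vs ends e"
begin

lemma card2: "card (ends e) = 2" using sg unfolding simple_graph_def by auto

lemma tree_exists: "\<exists>B. spanning_tree Vs ends B"
proof -
  have "acyclic_edges ends {}" unfolding acyclic_edges_def by simp
  moreover have "connected_sub Vs ends UNIV" using gc unfolding graph_connected_def .
  ultimately show ?thesis using exists_tree[of "{}" UNIV ends Vs] by blast
qed

lemma tree_nonempty: assumes "spanning_tree Vs ends B" shows "B \<noteq> {}"
proof
  assume B: "B = {}"
  obtain e :: 'e where True by simp
  obtain u w where uw: "ends e = {u, w}" "u \<noteq> w" using card2[of e] by (meson card_2_iff)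
  have "u \<in> Vs" "w \<in> Vs" using sg uw unfolding simple_graph_def by auto
  then have "(adj ends B)\<^sup>*\<^sup>* u w" using assms unfolding spanning_tree_def connected_sub_def by auto
  moreover have "(adj ends {})\<^sup>*\<^sup>* x y \<Longrightarrow> x = y" for x y
    by (induction rule: rtranclp_induct) (auto simp: adj_def)
  ultimately show False using uw B by blast
qed

lemma tree_not_univ: assumes "spanning_tree Vs ends B" shows "B \<noteq> UNIV"
proof
  assume B: "B = UNIV"
  obtain e :: 'e where True by simp
  obtain u w where uw: "ends e = {u, w}" "u \<noteq> w" using card2[of e] by (meson card_2_iff)
  have "u \<in> Vs" "w \<in> Vs" using sg uw unfolding simple_graph_def by auto
  then have "(adj ends (UNIV - {e}))\<^sup>*\<^sup>* u w" using nb unfolding is_bridge_def connected_sub_def by auto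
  then show False using assms B uw unfolding spanning_tree_def acyclic_edges_def by blast
qed

lemma tree_pair:
  assumes B0: "spanning_tree Vs ends B0" and ab: "a \<noteq> b"
  shows "\<exists>B. spanning_tree Vs ends B \<and> a \<in> B \<and> b \<in> B \<and> B \<subseteq> B0 \<union> {a, b}"
proof -
  have ac: "acyclic_edges ends {a, b}"
    unfolding acyclic_edges_def
  proof (intro ballI allI impI notI)
    fix f x y assume f: "f \<in> {a, b}" and fxy: "ends f = {x, y}"
      and c: "(adj ends ({a, b} - {f}))\<^sup>*\<^sup>* x y"
    obtain g where g: "{a, b} - {f} = {g}" "g \<noteq> f" using f ab by auto
    have "x \<noteq> y" using fxy card2[of f] by auto
    then have "ends g = {x, y}" using conn_single[of ends g x y] c g card2 by auto
    then have "ends g = ends f" using fxy by simp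
    then show False using g sg unfolding simple_graph_def inj_def by auto
  qed
  have "connected_sub Vs ends (B0 \<union> {a, b})"
    using B0 conn_mono[of B0 "B0 \<union> {a,b}" ends] unfolding spanning_tree_def connected_sub_def by blast
  then obtain B where "{a,b} \<subseteq> B" "B \<subseteq> B0 \<union> {a,b}" "spanning_tree Vs ends B"
    using exists_tree[of "{a,b}" "B0 \<union> {a,b}" ends Vs] ac by blast
  then show ?thesis by blast
qed

end

definition ind :: "'e set \<Rightarrow> 'e \<Rightarrow> real" where
  "ind B i = (if i \<in> B then 1 else 0)"

definition am :: "real^'e \<Rightarrow> 'e set \<Rightarrow> 'e \<Rightarrow> bool" where
  "am x B m \<longleftrightarrow> (\<forall>i. x$i + ind B i \<le> x$m + ind B m)"

lemma ind_bounds: "0 \<le> ind B i" "ind B i \<le> 1" by (auto simp: ind_def)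

lemma mem_translate: fixes x y :: "'a::ab_group_add" shows "y \<in> (\<lambda>\<xi>. x + \<xi>) ` S \<longleftrightarrow> y - x \<in> S"
proof
  assume "y \<in> (\<lambda>\<xi>. x + \<xi>) ` S"
  then obtain \<xi> where "\<xi> \<in> S" "y = x + \<xi>" by auto
  then show "y - x \<in> S" by (metis add_diff_cancel_left')
next
  assume "y - x \<in> S" then show "y \<in> (\<lambda>\<xi>. x + \<xi>) ` S"
    by (rule rev_image_eqI) simp
qed

lemma ttype_am:
  "ttype n (\<lambda>l. neg_ind (Bs l)) x m = {l\<in>{1..n}. am x (Bs l) m}"
proof -
  have "neg_ind B - x \<in> Sbar m \<longleftrightarrow> am x B m" for B
    unfolding Sbar_def am_def neg_ind_def ind_def
    by (auto simp: algebra_simps)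
  then show ?thesis unfolding ttype_def mem_translate by simp
qed

lemma am_exists: "\<exists>m. am (x::real^'e::finite) B m"
proof -
  let ?f = "\<lambda>i. x$i + ind B i"
  have "Max (range ?f) \<in> range ?f" by (rule Max_in) auto
  then obtain m where m: "Max (range ?f) = ?f m" by (rule imageE)
  have "?f i \<le> Max (range ?f)" for i by (rule Max_ge) auto
  then show ?thesis unfolding am_def using m by metis
qed

definition cellP :: "'e set set \<Rightarrow> real^'e \<Rightarrow> (real^'e) set" where
  "cellP BB x0 = {y. \<forall>B\<in>BB. \<forall>m. am x0 B m \<longrightarrow> am y B m}"

lemma closed_am: "closed {y::real^'e::finite. am y B m}"
proof -
  have "{y::real^'e. am y B m} = (\<Inter>i. {y. y$i + ind B i \<le> y$m + ind B m})"
    unfolding am_def by auto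
  moreover have "closed {y::real^'e. y$i + ind B i \<le> y$m + ind B m}" for i
    by (intro closed_Collect_le continuous_intros)
  ultimately show ?thesis by auto
qed

lemma closed_cellP: "closed (cellP BB (x0::real^'e::finite))"
proof -
  have "cellP BB x0 = (\<Inter>B\<in>BB. \<Inter>m\<in>{m. am x0 B m}. {y. am y B m})"
    unfolding cellP_def by auto
  moreover have "closed (\<Inter>B\<in>BB. \<Inter>m\<in>{m. am x0 B m}. {y. am y B m})"
    by (auto intro!: closed_INT closed_am)
  ultimately show ?thesis by simp
qed

lemma am_comb:
  fixes x0 y :: "real^'e::finite"
  assumes ext: "\<forall>m. am x0 B m \<longrightarrow> am y B m" and s: "0 < s" "s \<le> 1"
  shows "am (y + s *\<^sub>R (x0 - y)) B m \<longleftrightarrow> am x0 B m"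
proof
  let ?z = "y + s *\<^sub>R (x0 - y)"
  have zc: "?z $ i = (1 - s) * y$i + s * x0$i" for i by (simp add: algebra_simps)
  assume z: "am ?z B m"
  show "am x0 B m"
  proof (rule ccontr)
    assume nm: "\<not> am x0 B m"
    then obtain i where i: "x0$i + ind B i > x0$m + ind B m" unfolding am_def by (auto simp: not_le)
    obtain m' where m': "am x0 B m'" using am_exists by blast
    then have ym': "am y B m'" using ext by blast
    have "x0$m' + ind B m' \<ge> x0$i + ind B i" using m' unfolding am_def by blast
    then have a: "x0$m' + ind B m' > x0$m + ind B m" using i by linarith
    have b: "y$m + ind B m \<le> y$m' + ind B m'" using ym' unfolding am_def by blast
    have c: "?z$m' + ind B m' \<le> ?z$m + ind B m" using z unfolding am_def by blast
    have e1: "(1 - s) * (y$m + ind B m) \<le> (1 - s) * (y$m' + ind B m')"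
      using b s by (intro mult_left_mono) auto
    have e2: "s * (x0$m + ind B m) < s * (x0$m' + ind B m')"
      using a s by (intro mult_strict_left_mono) auto
    have "?z$m + ind B m = (1 - s) * (y$m + ind B m) + s * (x0$m + ind B m)"
      unfolding zc by (simp add: algebra_simps)
    moreover have "?z$m' + ind B m' = (1 - s) * (y$m' + ind B m') + s * (x0$m' + ind B m')"
      unfolding zc by (simp add: algebra_simps)
    ultimately show False using c e1 e2 by linarith
  qed
next
  let ?z = "y + s *\<^sub>R (x0 - y)"
  have zc: "?z $ i + ind B i = (1 - s) * (y$i + ind B i) + s * (x0$i + ind B i)" for i
    by (simp add: algebra_simps)
  assume "am x0 B m"
  then have hx: "x0$i + ind B i \<le> x0$m + ind B m" and hy: "y$i + ind B i \<le> y$m + ind B m" for i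
    using ext unfolding am_def by blast+
  show "am ?z B m" unfolding am_def
  proof
    fix i
    have "(1 - s) * (y$i + ind B i) \<le> (1 - s) * (y$m + ind B m)"
      using hy[of i] s by (intro mult_left_mono) auto
    moreover have "s * (x0$i + ind B i) \<le> s * (x0$m + ind B m)"
      using hx[of i] s by (intro mult_left_mono) auto
    ultimately show "?z$i + ind B i \<le> ?z$m + ind B m" unfolding zc by linarith
  qed
qed

lemma closure_cell:
  fixes x0 :: "real^'e::finite"
  shows "closure {x. \<forall>B\<in>BB. \<forall>m. am x B m = am x0 B m} = cellP BB x0"
proof
  show "closure {x. \<forall>B\<in>BB. \<forall>m. am x B m = am x0 B m} \<subseteq> cellP BB x0"
  proof (rule closure_minimal)
    show "{x. \<forall>B\<in>BB. \<forall>m. am x B m = am x0 B m} \<subseteq> cellP BB x0"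
      unfolding cellP_def by auto
  qed (rule closed_cellP)
next
  show "cellP BB x0 \<subseteq> closure {x. \<forall>B\<in>BB. \<forall>m. am x B m = am x0 B m}"
  proof
    fix y assume y: "y \<in> cellP BB x0"
    let ?S = "{x. \<forall>B\<in>BB. \<forall>m. am x B m = am x0 B m}"
    have zS: "y + s *\<^sub>R (x0 - y) \<in> ?S" if "0 < s" "s \<le> 1" for s
      using am_comb[OF _ that] y unfolding cellP_def by blast
    show "y \<in> closure ?S"
      unfolding closure_approachable
    proof (intro allI impI)
      fix e :: real assume e: "e > 0"
      define N where "N = norm (x0 - y)"
      define s where "s = min 1 (e / (N + 1))"
      have N0: "N \<ge> 0" unfolding N_def by simp
      have s0: "0 < s" "s \<le> 1" unfolding s_def using e N0 by auto
      have "dist (y + s *\<^sub>R (x0 - y)) y = s * N"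
        unfolding N_def dist_norm using s0 by simp
      also have "\<dots> \<le> e / (N + 1) * N" unfolding s_def using N0 by (intro mult_right_mono) auto
      also have "\<dots> < e"
      proof -
        have "e / (N + 1) * N = e * (N / (N + 1))" by simp
        also have "\<dots> < e * 1" using e N0 by (intro mult_strict_left_mono) auto
        finally show ?thesis by simp
      qed
      finally show "\<exists>x\<in>?S. dist x y < e" using zS[OF s0] by blast
    qed
  qed
qed

definition Dset :: "'e::finite list \<Rightarrow> (real^'e) set" where
  "Dset is = {x. \<exists>c. (\<forall>j. j \<notin> set is \<longrightarrow> x$j = c) \<and>
      (\<forall>p<length is. c \<le> x$(is!p) \<and> x$(is!p) \<le> c + 1) \<and>
      (\<forall>p q. p < q \<longrightarrow> q < length is \<longrightarrow> x$(is!q) \<le> x$(is!p))}"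

definition strictP :: "'e::finite list \<Rightarrow> real^'e \<Rightarrow> real \<Rightarrow> bool" where
  "strictP is x c \<longleftrightarrow> (\<forall>j. j \<notin> set is \<longrightarrow> x$j = c) \<and>
      (\<forall>p<length is. c < x$(is!p) \<and> x$(is!p) < c + 1) \<and>
      (\<forall>p q. p < q \<longrightarrow> q < length is \<longrightarrow> x$(is!q) < x$(is!p))"

definition xst :: "'e::finite list \<Rightarrow> real^'e" where
  "xst is = (\<chi> i. if i \<in> set is then real (length is - (THE p. p < length is \<and> is!p = i)) / real (length is + 1) else 0)"

lemma xst_nth:
  assumes "distinct is" "p < length is"
  shows "xst is $ (is!p) = real (length is - p) / real (length is + 1)"
proof -
  have "(THE q. q < length is \<and> is!q = is!p) = p"
    using assms by (auto simp: nth_eq_iff_index_eq)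
  then show ?thesis unfolding xst_def using assms by simp
qed

lemma xst_out: "j \<notin> set is \<Longrightarrow> xst is $ j = 0"
  unfolding xst_def by simp

lemma xst_le_iff:
  assumes "distinct is" "p < length is" "q < length is"
  shows "xst is $ (is!q) \<le> xst is $ (is!p) \<longleftrightarrow> p \<le> q"
proof -
  have "real (length is - q) / real (length is + 1) \<le> real (length is - p) / real (length is + 1)
     \<longleftrightarrow> real (length is - q) \<le> real (length is - p)"
    by (simp add: divide_le_cancel)
  then show ?thesis using assms by (simp add: xst_nth)
qed

lemma xst_pos:
  assumes "distinct is" "p < length is"
  shows "0 < xst is $ (is!p)" "xst is $ (is!p) < 1"
  using assms by (auto simp: xst_nth)

lemma strict_xst: "distinct is \<Longrightarrow> strictP is (xst is) 0"
  unfolding strictP_def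
  by (auto simp: xst_out xst_pos xst_nth divide_strict_right_mono)

lemma strict_bounds:
  assumes "strictP is x c"
  shows "c \<le> x$i \<and> x$i < c + 1"
proof (cases "i \<in> set is")
  case True
  then obtain p where "p < length is" "i = is!p" by (auto simp: in_set_conv_nth)
  then show ?thesis using assms unfolding strictP_def by force
next
  case False then show ?thesis using assms unfolding strictP_def by simp
qed

lemma D_bounds:
  fixes x :: "real^'e::finite"
  assumes "\<forall>j. j \<notin> set is \<longrightarrow> x$j = c" "\<forall>p<length is. c \<le> x$(is!p) \<and> x$(is!p) \<le> c + 1"
  shows "c \<le> x$i \<and> x$i \<le> c + 1"
proof (cases "i \<in> set is")
  case True
  then obtain p where "p < length is" "i = is!p" by (auto simp: in_set_conv_nth)
  then show ?thesis using assms by force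
next
  case False then show ?thesis using assms by auto
qed

lemma am_char:
  assumes b: "\<forall>i. c \<le> x$i \<and> x$i < c + 1" and B: "B \<noteq> {}"
  shows "am x B m \<longleftrightarrow> m \<in> B \<and> (\<forall>i\<in>B. x$i \<le> x$m)"
proof
  assume a: "am x B m"
  obtain i where i: "i \<in> B" using B by blast
  have mB: "m \<in> B"
  proof (rule ccontr)
    assume "m \<notin> B"
    then have "x$i + 1 \<le> x$m" using a i unfolding am_def ind_def by (metis add.right_neutral)
    then show False using b[rule_format, of i] b[rule_format, of m] by linarith
  qed
  moreover have "\<forall>i\<in>B. x$i \<le> x$m"
  proof
    fix i assume "i \<in> B"
    then have "x$i + 1 \<le> x$m + 1" using a mB unfolding am_def ind_def by metis
    then show "x$i \<le> x$m" by simp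
  qed
  ultimately show "m \<in> B \<and> (\<forall>i\<in>B. x$i \<le> x$m)" by blast
next
  assume a: "m \<in> B \<and> (\<forall>i\<in>B. x$i \<le> x$m)"
  show "am x B m" unfolding am_def
  proof
    fix i
    show "x$i + ind B i \<le> x$m + ind B m"
    proof (cases "i \<in> B")
      case True then show ?thesis using a by (simp add: ind_def)
    next
      case False then show ?thesis using a b[rule_format, of i] b[rule_format, of m] by (simp add: ind_def)
    qed
  qed
qed

locale trop =
  fixes BB :: "'e::finite set set"
  assumes BBne: "BB \<noteq> {}" and Bne: "B \<in> BB \<Longrightarrow> B \<noteq> {}" and Bnu: "B \<in> BB \<Longrightarrow> B \<noteq> UNIV"
    and Bcard: "B \<in> BB \<Longrightarrow> B' \<in> BB \<Longrightarrow> card B = card B'"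
    and exch: "B0 \<in> BB \<Longrightarrow> a \<noteq> b \<Longrightarrow> \<exists>B\<in>BB. a \<in> B \<and> b \<in> B \<and> B \<subseteq> B0 \<union> {a, b}"
begin

definition validL :: "'e list \<Rightarrow> bool" where
  "validL is \<longleftrightarrow> distinct is \<and> UNIV - set is \<in> BB"

lemma am_xst:
  assumes d: "distinct is" and B: "B \<noteq> {}"
  shows "am (xst is) B m \<longleftrightarrow> m \<in> B \<and> (\<forall>i\<in>B. xst is $ i \<le> xst is $ m)"
  using am_char[OF _ B] strict_bounds[OF strict_xst[OF d]] by blast

lemma D_sub_cell:
  assumes v: "validL is"
  shows "Dset is \<subseteq> cellP BB (xst is)"
proof
  fix y assume "y \<in> Dset is"
  then obtain c where c1: "\<forall>j. j \<notin> set is \<longrightarrow> y$j = c"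
    and c2: "\<forall>p<length is. c \<le> y$(is!p) \<and> y$(is!p) \<le> c + 1"
    and c3: "\<forall>p q. p < q \<longrightarrow> q < length is \<longrightarrow> y$(is!q) \<le> y$(is!p)"
    unfolding Dset_def by blast
  have yb: "c \<le> y$i \<and> y$i \<le> c + 1" for i using D_bounds[OF c1 c2] .
  have d: "distinct is" using v unfolding validL_def by blast
  show "y \<in> cellP BB (xst is)" unfolding cellP_def
  proof (intro CollectI ballI allI impI)
    fix B m assume BB: "B \<in> BB" and a: "am (xst is) B m"
    have Bn: "B \<noteq> {}" using Bne[OF BB] .
    from a have mB: "m \<in> B" and mx: "\<forall>i\<in>B. xst is $ i \<le> xst is $ m"
      using am_xst[OF d Bn] by blast+
    have le: "y$i \<le> y$m" if iB: "i \<in> B" for i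
    proof (cases "m \<in> set is")
      case False
      then have "xst is $ m = 0" by (rule xst_out)
      then have "xst is $ i \<le> 0" using mx iB by simp
      then have "i \<notin> set is" using xst_pos(1)[OF d] by (metis in_set_conv_nth not_le)
      then show ?thesis using c1 False by simp
    next
      case True
      then obtain p where p: "p < length is" "m = is!p" by (auto simp: in_set_conv_nth)
      show ?thesis
      proof (cases "i \<in> set is")
        case False then show ?thesis using c1 yb[of m] by simp
      next
        case True
        then obtain q where q: "q < length is" "i = is!q" by (auto simp: in_set_conv_nth)
        have "xst is $ (is!q) \<le> xst is $ (is!p)" using mx iB p q by simp
        then have "p \<le> q" using xst_le_iff[OF d p(1) q(1)] by simp
        then show ?thesis using c3 p q by (cases "p = q") auto
      qed
    qed
    show "am y B m" unfolding am_def
    proof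
      fix i
      show "y$i + ind B i \<le> y$m + ind B m"
      proof (cases "i \<in> B")
        case True then show ?thesis using le mB by (simp add: ind_def)
      next
        case False then show ?thesis using yb[of i] yb[of m] mB by (simp add: ind_def)
      qed
    qed
  qed
qed

lemma cell_sub_D:
  assumes v: "validL is"
  shows "cellP BB (xst is) \<subseteq> Dset is"
proof
  fix y assume y: "y \<in> cellP BB (xst is)"
  have d: "distinct is" and B0: "UNIV - set is \<in> BB" using v unfolding validL_def by blast+
  let ?B0 = "UNIV - set is"
  obtain j0 where j0: "j0 \<in> ?B0" using Bne[OF B0] by blast
  have F: "am y B m" if B: "B \<in> BB" "m \<in> B" "\<forall>i\<in>B. xst is $ i \<le> xst is $ m" for B m
  proof -
    have "am (xst is) B m" using am_xst[OF d Bne[OF B(1)]] B by blast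
    then show ?thesis using y B(1) unfolding cellP_def by blast
  qed
  have x0: "xst is $ i = 0" if "i \<in> ?B0" for i using that xst_out by simp
  have amB0: "am y ?B0 j" if "j \<in> ?B0" for j
    using F[OF B0 that] x0 that by simp
  let ?c = "y$j0"
  have const: "y$j = ?c" if j: "j \<notin> set is" for j
  proof -
    have "y$j0 + ind ?B0 j0 \<le> y$j + ind ?B0 j" using amB0[of j] j unfolding am_def by blast
    moreover have "y$j + ind ?B0 j \<le> y$j0 + ind ?B0 j0" using amB0[OF j0] unfolding am_def by blast
    ultimately show ?thesis using j j0 by (simp add: ind_def)
  qed
  have upper: "y$(is!p) \<le> ?c + 1" if p: "p < length is" for p
  proof -
    have "y$(is!p) + ind ?B0 (is!p) \<le> y$j0 + ind ?B0 j0" using amB0[OF j0] unfolding am_def by blast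
    then show ?thesis using j0 p by (simp add: ind_def)
  qed
  have lower: "?c \<le> y$(is!p)" if p: "p < length is" for p
  proof -
    have ne: "is!p \<noteq> j0" using j0 p by auto
    obtain B where B: "B \<in> BB" "is!p \<in> B" "j0 \<in> B" "B \<subseteq> ?B0 \<union> {is!p, j0}"
      using exch[OF B0 ne] by blast
    have "\<forall>i\<in>B. xst is $ i \<le> xst is $ (is!p)"
    proof
      fix i assume "i \<in> B"
      then have "i \<in> ?B0 \<or> i = is!p" using B(4) j0 by blast
      then show "xst is $ i \<le> xst is $ (is!p)" using x0 xst_pos(1)[OF d p] by auto
    qed
    then have "am y B (is!p)" using F B by blast
    then have "y$j0 + ind B j0 \<le> y$(is!p) + ind B (is!p)" unfolding am_def by blast
    then show ?thesis using B by (simp add: ind_def)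
  qed
  have order: "y$(is!q) \<le> y$(is!p)" if pq: "p < q" "q < length is" for p q
  proof -
    have p: "p < length is" using pq by simp
    have ne: "is!p \<noteq> is!q" using d pq by (simp add: nth_eq_iff_index_eq)
    obtain B where B: "B \<in> BB" "is!p \<in> B" "is!q \<in> B" "B \<subseteq> ?B0 \<union> {is!p, is!q}"
      using exch[OF B0 ne] by blast
    have "\<forall>i\<in>B. xst is $ i \<le> xst is $ (is!p)"
    proof
      fix i assume "i \<in> B"
      then have "i \<in> ?B0 \<or> i = is!p \<or> i = is!q" using B(4) by blast
      moreover have "xst is $ (is!q) \<le> xst is $ (is!p)" using xst_le_iff[OF d p pq(2)] pq by simp
      ultimately show "xst is $ i \<le> xst is $ (is!p)" using x0 xst_pos(1)[OF d p] by auto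
    qed
    then have "am y B (is!p)" using F B by blast
    then have "y$(is!q) + ind B (is!q) \<le> y$(is!p) + ind B (is!p)" unfolding am_def by blast
    then show ?thesis using B by (simp add: ind_def)
  qed
  show "y \<in> Dset is" unfolding Dset_def
    using const upper lower order by blast
qed

end

context trop begin

lemma Dset_eq: "validL is \<Longrightarrow> Dset is = cellP BB (xst is)"
  using D_sub_cell cell_sub_D by blast

lemma two_elems: "\<exists>i::'e. i \<noteq> m"
proof -
  obtain B where B: "B \<in> BB" using BBne by blast
  obtain a where "a \<in> B" using Bne[OF B] by blast
  moreover obtain b where "b \<notin> B" using Bnu[OF B] by blast
  ultimately show ?thesis by metis
qed

lemma bounded_am:
  assumes bd: "tbounded (cellP BB x0)"
  shows "\<exists>B\<in>BB. am x0 B m"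
proof (rule ccontr)
  assume nm: "\<not> (\<exists>B\<in>BB. am x0 B m)"
  obtain i where im: "i \<noteq> m" using two_elems by blast
  obtain C where C: "\<forall>x\<in>cellP BB x0. \<forall>i j. \<bar>x$i - x$j\<bar> \<le> C" using bd unfolding tbounded_def by blast
  define t where "t = C + \<bar>x0$m - x0$i\<bar> + 1"
  define y where "y = (\<chi> k. if k = m then x0$m - t else x0$k)"
  have t0: "t \<ge> 0"
  proof -
    have "x0 \<in> cellP BB x0" unfolding cellP_def by blast
    then have "\<bar>x0$m - x0$i\<bar> \<le> C" using C by blast
    then show ?thesis unfolding t_def by linarith
  qed
  have yle: "y$k \<le> x0$k" for k unfolding y_def using t0 by auto
  have "y \<in> cellP BB x0" unfolding cellP_def
  proof (intro CollectI ballI allI impI)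
    fix B m' assume B: "B \<in> BB" and a: "am x0 B m'"
    then have "m' \<noteq> m" using nm by blast
    then have ym': "y$m' = x0$m'" unfolding y_def by simp
    show "am y B m'" unfolding am_def
    proof
      fix k
      have "x0$k + ind B k \<le> x0$m' + ind B m'" using a unfolding am_def by blast
      then show "y$k + ind B k \<le> y$m' + ind B m'" using yle[of k] ym' by linarith
    qed
  qed
  then have "\<bar>y$m - y$i\<bar> \<le> C" using C by blast
  moreover have "y$m = x0$m - t" "y$i = x0$i" unfolding y_def using im by auto
  ultimately show False unfolding t_def by linarith
qed

lemma am_to_D:
  assumes ex: "\<And>m. \<exists>B\<in>BB. am x0 B m"
  shows "\<exists>is. validL is \<and> x0 \<in> Dset is"
proof -
  let ?f = "\<lambda>i. x0$i"
  define c where "c = Min (range ?f)"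
  have cle: "c \<le> x0$i" for i unfolding c_def by (rule Min_le) auto
  have "c \<in> range ?f" unfolding c_def by (rule Min_in) auto
  then obtain m where m: "c = x0$m" by (rule imageE)
  obtain B where B: "B \<in> BB" "am x0 B m" using ex by blast
  have amB: "x0$i + ind B i \<le> x0$m + ind B m" for i using B(2) unfolding am_def by blast
  have onB: "x0$i = c" if "i \<in> B" for i
    using amB[of i] that cle[of i] m ind_bounds[of B m] by (simp add: ind_def)
  have up: "x0$i \<le> c + 1" for i
    using amB[of i] m ind_bounds[of B m] ind_bounds[of B i] by linarith
  obtain xs where xs: "set xs = UNIV - B" "distinct xs" using finite_distinct_list[of "UNIV - B"] by auto
  define L where "L = sort_key (\<lambda>i. - x0$i) xs"
  have d: "distinct L" "set L = UNIV - B" unfolding L_def using xs by auto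
  have srt: "sorted (map (\<lambda>i. - x0$i) L)" unfolding L_def by simp
  have v: "validL L" unfolding validL_def using d B by (simp add: Diff_Diff_Int)
  have h1: "\<forall>j. j \<notin> set L \<longrightarrow> x0$j = c" using d onB by auto
  have h2: "\<forall>p<length L. c \<le> x0$(L!p) \<and> x0$(L!p) \<le> c + 1" using cle up by auto
  have h3: "\<forall>p q. p < q \<longrightarrow> q < length L \<longrightarrow> x0$(L!q) \<le> x0$(L!p)"
  proof (intro allI impI)
    fix p q assume pq: "p < q" "q < length L"
    have "(map (\<lambda>i. - x0$i) L)!p \<le> (map (\<lambda>i. - x0$i) L)!q"
      using sorted_nth_mono[OF srt, of p q] pq by simp
    then show "x0$(L!q) \<le> x0$(L!p)" using pq by simp
  qed
  have "x0 \<in> Dset L" unfolding Dset_def by (intro CollectI exI[of _ c] conjI h1 h2 h3)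
  then show ?thesis using v by blast
qed

lemma bounded_D: "tbounded (Dset is)"
  unfolding tbounded_def
proof (intro exI ballI allI)
  fix x i j assume "x \<in> Dset is"
  then obtain c where c1: "\<forall>j. j \<notin> set is \<longrightarrow> x$j = c"
    and c2: "\<forall>p<length is. c \<le> x$(is!p) \<and> x$(is!p) \<le> c + 1"
    unfolding Dset_def by blast
  show "\<bar>x$i - x$j\<bar> \<le> 1" using D_bounds[OF c1 c2, of i] D_bounds[OF c1 c2, of j] by linarith
qed

lemma D_unique:
  assumes v: "validL is" and v': "validL is'" and sub: "Dset is \<subseteq> Dset is'"
  shows "is = is'"
proof -
  have d: "distinct is" and B0: "UNIV - set is \<in> BB" using v unfolding validL_def by blast+
  have d': "distinct is'" and B0': "UNIV - set is' \<in> BB" using v' unfolding validL_def by blast+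
  let ?x = "xst is"
  have "?x \<in> Dset is" using Dset_eq[OF v] unfolding cellP_def by blast
  then have "?x \<in> Dset is'" using sub by blast
  then obtain c where c1: "\<forall>j. j \<notin> set is' \<longrightarrow> ?x$j = c"
    and c2: "\<forall>p<length is'. c \<le> ?x$(is'!p) \<and> ?x$(is'!p) \<le> c + 1"
    and c3: "\<forall>p q. p < q \<longrightarrow> q < length is' \<longrightarrow> ?x$(is'!q) \<le> ?x$(is'!p)"
    unfolding Dset_def by blast
  have xb: "c \<le> ?x$i" for i using D_bounds[OF c1 c2] by blast
  have pos: "0 < ?x$i" if "i \<in> set is" for i
    using that xst_pos(1)[OF d] by (metis in_set_conv_nth)
  obtain j0 where j0: "j0 \<notin> set is" using Bne[OF B0] by blast
  have "c \<le> 0" using xb[of j0] xst_out[OF j0] by simp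
  obtain j1 where j1: "j1 \<notin> set is'" using Bne[OF B0'] by blast
  have "c \<ge> 0"
  proof -
    have "c = ?x$j1" using c1 j1 by simp
    moreover have "?x$j1 \<ge> 0" using pos[of j1] xst_out[of j1 "is"] by (cases "j1 \<in> set is") auto
    ultimately show ?thesis by simp
  qed
  then have c0: "c = 0" using \<open>c \<le> 0\<close> by simp
  have sub1: "UNIV - set is' \<subseteq> UNIV - set is"
  proof
    fix j assume "j \<in> UNIV - set is'"
    then have "?x$j = 0" using c1 c0 by simp
    then show "j \<in> UNIV - set is" using pos[of j] by auto
  qed
  have "card (UNIV - set is') = card (UNIV - set is)" using Bcard[OF B0' B0] .
  then have "UNIV - set is' = UNIV - set is" by (rule card_subset_eq[OF finite sub1])
  then have seq: "set is = set is'" by blast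
  let ?g = "\<lambda>i. - ?x$i"
  have inj: "inj_on ?g (set is)"
  proof
    fix a b assume a: "a \<in> set is" and b: "b \<in> set is" and e: "?g a = ?g b"
    obtain p where p: "p < length is" "a = is!p" using a by (auto simp: in_set_conv_nth)
    obtain q where q: "q < length is" "b = is!q" using b by (auto simp: in_set_conv_nth)
    have "p \<le> q" using xst_le_iff[OF d p(1) q(1)] e p q by simp
    moreover have "q \<le> p" using xst_le_iff[OF d q(1) p(1)] e p q by simp
    ultimately show "a = b" using p q by simp
  qed
  have s1: "sorted (map ?g is)"
    unfolding sorted_iff_nth_mono
  proof (intro allI impI)
    fix p q assume pq: "p \<le> q" "q < length (map ?g is)"
    then show "map ?g is ! p \<le> map ?g is ! q" using xst_le_iff[OF d, of p q] by simp
  qed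
  have s2: "sorted (map ?g is')"
    unfolding sorted_iff_nth_mono
  proof (intro allI impI)
    fix p q assume pq: "p \<le> q" "q < length (map ?g is')"
    show "map ?g is' ! p \<le> map ?g is' ! q"
    proof (cases "p = q")
      case True then show ?thesis by simp
    next
      case False
      then have "p < q" "q < length is'" using pq by auto
      then have "?x$(is'!q) \<le> ?x$(is'!p)" using c3 by blast
      then show ?thesis using \<open>p < q\<close> \<open>q < length is'\<close> by simp
    qed
  qed
  have inj': "inj_on ?g (set is')" using inj seq by simp
  have dm1: "distinct (map ?g is)" using d inj by (simp add: distinct_map)
  have dm2: "distinct (map ?g is')" using d' inj' by (simp add: distinct_map)
  have "set (map ?g is) = set (map ?g is')" using seq by simp
  then have "map ?g is = map ?g is'" by (rule sorted_distinct_set_unique[OF s1 dm1 s2 dm2])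
  moreover have "inj_on ?g (set is \<union> set is')" using inj seq by simp
  ultimately show ?thesis using inj_on_map_eq_map by blast
qed

end

lemma tpt_comp: "tpt L $ i = (if i \<in> set L then 0 else -1)"
  unfolding tpt_def neg_ind_def by simp

lemma in_take_iff:
  assumes "distinct L" "q < length L"
  shows "L!q \<in> set (take j L) \<longleftrightarrow> q < j"
proof
  assume "L!q \<in> set (take j L)"
  then obtain t where t: "t < length (take j L)" "take j L ! t = L!q" by (auto simp: in_set_conv_nth)
  then have "L!t = L!q" "t < length L" "t < j" by auto
  then have "t = q" using assms by (simp add: nth_eq_iff_index_eq)
  then show "q < j" using t by simp
next
  assume "q < j"
  then have "take j L ! q = L!q" "q < length (take j L)" using assms by auto
  then show "L!q \<in> set (take j L)" by (metis nth_mem)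
qed

definition Vset :: "'e::finite list \<Rightarrow> (real^'e) set" where
  "Vset L = insert 0 {tpt (take j L) | j. j \<in> {1..length L}}"

lemma Vset_finite: "finite (Vset L)"
proof -
  have "{tpt (take j L) | j. j \<in> {1..length L}} = (\<lambda>j. tpt (take j L)) ` {1..length L}" by auto
  then show ?thesis unfolding Vset_def by simp
qed

lemma Vset_ne: "Vset L \<noteq> {}" unfolding Vset_def by simp

lemma Vset_cases:
  assumes "w \<in> Vset L"
  shows "w = 0 \<or> (\<exists>j. 1 \<le> j \<and> j \<le> length L \<and> w = tpt (take j L))"
  using assms unfolding Vset_def by auto

lemma V_out: "w \<in> Vset L \<Longrightarrow> j \<notin> set L \<Longrightarrow> w$j = (if w = 0 then 0 else -1)"
proof -
  assume w: "w \<in> Vset L" and j: "j \<notin> set L"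
  show ?thesis
  proof (cases "w = 0")
    case True then show ?thesis by simp
  next
    case False
    then obtain t where t: "w = tpt (take t L)" using Vset_cases[OF w] by blast
    have "j \<notin> set (take t L)" using j in_set_takeD by metis
    then show ?thesis using t False by (simp add: tpt_comp)
  qed
qed

lemma V_vals: "w \<in> Vset L \<Longrightarrow> w$i = 0 \<or> w$i = -1"
  using Vset_cases[of w L] by (auto simp: tpt_comp split: if_splits)

lemma V_out_le: "w \<in> Vset L \<Longrightarrow> j \<notin> set L \<Longrightarrow> w$j \<le> w$i"
  using V_out[of w L j] V_vals[of w L i] by (cases "w = 0") auto

lemma V_order:
  assumes "distinct L" "w \<in> Vset L" "p < q" "q < length L"
  shows "w$(L!q) \<le> w$(L!p)"
proof (cases "w = 0")
  case True then show ?thesis by simp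
next
  case False
  then obtain t where t: "w = tpt (take t L)" using Vset_cases[OF assms(2)] by blast
  have "L!q \<in> set (take t L) \<Longrightarrow> L!p \<in> set (take t L)"
    using in_take_iff[OF assms(1)] assms(3,4) by auto
  then show ?thesis using t by (auto simp: tpt_comp)
qed

lemma min_lower:
  assumes "finite V" "V \<noteq> {}" "\<forall>w\<in>V. a \<le> f w"
  shows "a \<le> Min (f ` V)"
  using assms by (simp add: Min_ge_iff)

lemma min_upper:
  assumes "finite V" "w \<in> V"
  shows "Min (f ` V) \<le> f w"
  using assms by simp

lemma tconv_sub_D:
  fixes L :: "'e::finite list"
  assumes d: "distinct L" and nu: "set L \<noteq> UNIV"
  shows "tconv (Vset L) \<subseteq> Dset L"
proof
  fix x assume "x \<in> tconv (Vset L)"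
  then obtain lam where lam: "\<forall>i. x$i = (MIN v\<in>Vset L. lam v + v$i)" unfolding tconv_def by blast
  let ?V = "Vset L"
  have fin: "finite ?V" and ne: "?V \<noteq> {}" by (rule Vset_finite, rule Vset_ne)
  have up: "x$i \<le> lam w + w$i" if "w \<in> ?V" for i w
    using lam min_upper[OF fin that] by simp
  have lo: "a \<le> x$i" if "\<forall>w\<in>?V. a \<le> lam w + w$i" for a i
    using lam min_lower[OF fin ne that] by simp
  show "x \<in> Dset L"
  proof -
    obtain j0 where j0: "j0 \<notin> set L" using nu by auto
    define c where "c = x$j0"
    have h1: "\<forall>j. j \<notin> set L \<longrightarrow> x$j = c"
    proof (intro allI impI)
      fix j assume j: "j \<notin> set L"
      have "x$j \<le> x$j0" using up V_out[OF _ j] V_out[OF _ j0] by (intro lo) (metis)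
      moreover have "x$j0 \<le> x$j" using up V_out[OF _ j] V_out[OF _ j0] by (intro lo) (metis)
      ultimately show "x$j = c" unfolding c_def by simp
    qed
    have h2: "\<forall>p<length L. c \<le> x$(L!p) \<and> x$(L!p) \<le> c + 1"
    proof (intro allI impI conjI)
      fix p assume p: "p < length L"
      show "c \<le> x$(L!p)" unfolding c_def
        using up[of _ j0] V_out_le[OF _ j0, of _ "L!p"] by (intro lo) (metis add_left_mono order_trans)
      have "x$(L!p) - 1 \<le> x$j0"
      proof (rule lo, rule ballI)
        fix w assume w: "w \<in> ?V"
        have "w$(L!p) \<le> w$j0 + 1" using V_vals[OF w, of "L!p"] V_vals[OF w, of j0] by auto
        then show "x$(L!p) - 1 \<le> lam w + w$j0" using up[OF w, of "L!p"] by linarith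
      qed
      then show "x$(L!p) \<le> c + 1" unfolding c_def by simp
    qed
    have h3: "\<forall>p q. p < q \<longrightarrow> q < length L \<longrightarrow> x$(L!q) \<le> x$(L!p)"
    proof (intro allI impI)
      fix p q assume pq: "p < q" "q < length L"
      show "x$(L!q) \<le> x$(L!p)"
      proof (rule lo, rule ballI)
        fix w assume w: "w \<in> ?V"
        show "x$(L!q) \<le> lam w + w$(L!p)" using up[OF w, of "L!q"] V_order[OF d w pq] by linarith
      qed
    qed
    show ?thesis unfolding Dset_def by (intro CollectI exI[of _ c] conjI h1 h2 h3)
  qed
qed

lemma D_sub_tconv:
  fixes L :: "'e::finite list"
  assumes d: "distinct L" and ne: "L \<noteq> []"
  shows "Dset L \<subseteq> tconv (Vset L)"
proof
  fix x assume "x \<in> Dset L"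
  then obtain c where c1: "\<forall>j. j \<notin> set L \<longrightarrow> x$j = c"
    and c2: "\<forall>p<length L. c \<le> x$(L!p) \<and> x$(L!p) \<le> c + 1"
    and c3: "\<forall>p q. p < q \<longrightarrow> q < length L \<longrightarrow> x$(L!q) \<le> x$(L!p)"
    unfolding Dset_def by blast
  have xb: "c \<le> x$i \<and> x$i \<le> c + 1" for i using D_bounds[OF c1 c2] .
  let ?V = "Vset L"
  have fin: "finite ?V" and nV: "?V \<noteq> {}" by (rule Vset_finite, rule Vset_ne)
  define lam where "lam w = Max (range (\<lambda>k. x$k - w$k))" for w :: "real^'e"
  have lam_ge: "x$i - w$i \<le> lam w" for i w unfolding lam_def by (rule Max_ge) auto
  have lam_le: "lam w \<le> a" if "\<forall>k. x$k - w$k \<le> a" for w a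
    unfolding lam_def using that by (subst Max_le_iff) auto
  have wit: "\<exists>w\<in>?V. lam w + w$i \<le> x$i" for i
  proof (cases "i \<in> set L")
    case False
    have "1 \<le> length L" using ne by (cases L) auto
    then have w: "tpt L \<in> ?V" unfolding Vset_def
      by (intro insertI2 CollectI exI[of _ "length L"]) simp
    have "lam (tpt L) \<le> c + 1"
    proof (rule lam_le, rule allI)
      fix k show "x$k - tpt L $ k \<le> c + 1"
        using xb[of k] c1 by (cases "k \<in> set L") (auto simp: tpt_comp)
    qed
    then have "lam (tpt L) + tpt L $ i \<le> x$i" using False c1 by (simp add: tpt_comp)
    then show ?thesis using w by blast
  next
    case True
    then obtain p where p: "p < length L" "i = L!p" by (auto simp: in_set_conv_nth)
    show ?thesis
    proof (cases "p = 0")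
      case True
      have "lam 0 \<le> x$i"
      proof (rule lam_le, rule allI)
        fix k show "x$k - (0::real^'e) $ k \<le> x$i"
        proof (cases "k \<in> set L")
          case True
          then obtain q where q: "q < length L" "k = L!q" by (auto simp: in_set_conv_nth)
          then show ?thesis using c3 p \<open>p = 0\<close> by (cases "q = 0") auto
        next
          case False then show ?thesis using c1 c2 p by auto
        qed
      qed
      moreover have "(0::real^'e) \<in> ?V" unfolding Vset_def by simp
      ultimately show ?thesis by force
    next
      case False
      let ?w = "tpt (take p L)"
      have w: "?w \<in> ?V" unfolding Vset_def using False p
        by (intro insertI2 CollectI exI[of _ p]) simp
      have wi: "?w $ i = -1" using in_take_iff[OF d p(1), of p] p by (simp add: tpt_comp)
      have "lam ?w \<le> x$i + 1"
      proof (rule lam_le, rule allI)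
        fix k show "x$k - ?w $ k \<le> x$i + 1"
        proof (cases "k \<in> set (take p L)")
          case True then show ?thesis using xb[of k] xb[of i] by (simp add: tpt_comp)
        next
          case kn: False
          show ?thesis
          proof (cases "k \<in> set L")
            case True
            then obtain q where q: "q < length L" "k = L!q" by (auto simp: in_set_conv_nth)
            then have "p \<le> q" using in_take_iff[OF d q(1), of p] kn by simp
            then have "x$k \<le> x$i" using c3 p q by (cases "p = q") auto
            then show ?thesis using kn by (simp add: tpt_comp)
          next
            case False then show ?thesis using kn c1 xb[of i] by (simp add: tpt_comp)
          qed
        qed
      qed
      then have "lam ?w + ?w $ i \<le> x$i" using wi by simp
      then show ?thesis using w by blast
    qed
  qed
  show "x \<in> tconv ?V" unfolding tconv_def
  proof (intro CollectI exI[of _ lam] allI)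
    fix i
    obtain w where w: "w \<in> ?V" "lam w + w$i \<le> x$i" using wit by blast
    have "\<forall>v\<in>?V. x$i \<le> lam v + v$i"
    proof
      fix v show "x$i \<le> lam v + v$i" using lam_ge[of i v] by linarith
    qed
    then have "x$i \<le> (MIN v\<in>?V. lam v + v$i)" by (rule min_lower[OF fin nV])
    moreover have "(MIN v\<in>?V. lam v + v$i) \<le> lam w + w$i" by (rule min_upper[OF fin w(1)])
    then have "(MIN v\<in>?V. lam v + v$i) \<le> x$i" using w(2) by linarith
    ultimately show "x$i = (MIN v\<in>?V. lam v + v$i)" by simp
  qed
qed

definition uvec :: "'e::finite list \<Rightarrow> nat \<Rightarrow> real^'e" where
  "uvec L j = (\<chi> i. if i \<in> set (take j L) then 1 else 0)"

definition oneout :: "'e::finite list \<Rightarrow> real^'e" where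
  "oneout L = (\<chi> i. if i \<in> set L then 0 else 1)"

lemma Dset_c:
  fixes L :: "'e::finite list"
  assumes x: "x \<in> Dset L" and j0: "j0 \<notin> set L"
  shows "(\<forall>j. j \<notin> set L \<longrightarrow> x$j = x$j0) \<and>
      (\<forall>p<length L. x$j0 \<le> x$(L!p) \<and> x$(L!p) \<le> x$j0 + 1) \<and>
      (\<forall>p q. p < q \<longrightarrow> q < length L \<longrightarrow> x$(L!q) \<le> x$(L!p))"
proof -
  obtain c where c1: "\<forall>j. j \<notin> set L \<longrightarrow> x$j = c"
    and c2: "\<forall>p<length L. c \<le> x$(L!p) \<and> x$(L!p) \<le> c + 1"
    and c3: "\<forall>p q. p < q \<longrightarrow> q < length L \<longrightarrow> x$(L!q) \<le> x$(L!p)"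
    using x unfolding Dset_def by blast
  have "x$j0 = c" using c1 j0 by blast
  then show ?thesis using c1 c2 c3 by simp
qed

lemma uvec_D:
  fixes L :: "'e::finite list"
  assumes d: "distinct L"
  shows "uvec L j \<in> Dset L"
proof -
  have h1: "\<forall>i. i \<notin> set L \<longrightarrow> uvec L j $ i = 0"
    unfolding uvec_def by (auto dest: in_set_takeD)
  have h2: "\<forall>p<length L. 0 \<le> uvec L j $ (L!p) \<and> uvec L j $ (L!p) \<le> 0 + 1"
    unfolding uvec_def by auto
  have h3: "\<forall>p q. p < q \<longrightarrow> q < length L \<longrightarrow> uvec L j $ (L!q) \<le> uvec L j $ (L!p)"
    unfolding uvec_def using in_take_iff[OF d] by auto
  show ?thesis unfolding Dset_def by (intro CollectI exI[of _ 0] conjI h1 h2 h3)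
qed

lemma const_D:
  fixes L :: "'e::finite list"
  shows "(\<chi> i. a) \<in> Dset L"
  unfolding Dset_def by (intro CollectI exI[of _ a]) auto

lemma zero_D: "(0::real^'e::finite) \<in> Dset L"
  using const_D[of 0 L] by (simp add: zero_vec_def)

lemma axis_span:
  fixes L :: "'e::finite list"
  assumes d: "distinct L" and p: "p < length L"
  shows "axis (L!p) 1 \<in> span (Dset L)"
proof -
  have "axis (L!p) 1 = uvec L (Suc p) - uvec L p"
    unfolding vec_eq_iff
  proof
    fix i
    show "axis (L!p) 1 $ i = (uvec L (Suc p) - uvec L p) $ i"
    proof (cases "i \<in> set L")
      case True
      then obtain q where q: "q < length L" "i = L!q" by (auto simp: in_set_conv_nth)
      have "(i = L!p) = (q = p)" using q p d by (simp add: nth_eq_iff_index_eq)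
      then show ?thesis unfolding uvec_def axis_def using in_take_iff[OF d q(1)] q by auto
    next
      case False
      then have "i \<noteq> L!p" using p by auto
      then show ?thesis unfolding uvec_def axis_def using False by (auto dest: in_set_takeD)
    qed
  qed
  then show ?thesis using uvec_D[OF d] by (simp add: span_diff span_base)
qed

lemma oneout_span:
  fixes L :: "'e::finite list"
  assumes d: "distinct L"
  shows "oneout L \<in> span (Dset L)"
proof -
  have "oneout L = (\<chi> i. 1) - uvec L (length L)"
    unfolding vec_eq_iff oneout_def uvec_def by simp
  then show ?thesis using uvec_D[OF d] const_D[of 1 L] by (simp add: span_diff span_base)
qed

lemma affD: "affine hull (Dset L) = span (Dset L)"
  by (rule affine_hull_span_0) (simp add: hull_inc zero_D)

lemma relint_strict:
  fixes L :: "'e::finite list"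
  assumes d: "distinct L" and nu: "set L \<noteq> UNIV" and x: "x \<in> rel_interior (Dset L)"
  shows "\<exists>c. strictP L x c"
proof -
  obtain j0 where j0: "j0 \<notin> set L" using nu by auto
  have xD: "x \<in> Dset L" and "\<exists>e>0. ball x e \<inter> affine hull (Dset L) \<subseteq> Dset L"
    using x unfolding mem_rel_interior_ball by blast+
  then obtain e where e: "e > 0" "ball x e \<inter> span (Dset L) \<subseteq> Dset L" unfolding affD by blast
  have xs: "x \<in> span (Dset L)" using xD by (simp add: span_base)
  have pert: "x + t *\<^sub>R axis (L!p) 1 \<in> Dset L" if "\<bar>t\<bar> < e" "p < length L" for t p
  proof -
    have "x + t *\<^sub>R axis (L!p) 1 \<in> span (Dset L)"
      using xs axis_span[OF d that(2)] by (simp add: span_add span_mul)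
    moreover have "x + t *\<^sub>R axis (L!p) 1 \<in> ball x e"
      using that(1) by (simp add: dist_norm)
    ultimately show ?thesis using e(2) by blast
  qed
  have comp: "(x + t *\<^sub>R axis a 1) $ i = x$i + (if i = a then t else 0)" for t a i
    unfolding axis_def by simp
  note xc = Dset_c[OF xD j0]
  let ?c = "x$j0"
  have s1: "?c < x$(L!p) \<and> x$(L!p) < ?c + 1" if p: "p < length L" for p
  proof
    have "\<bar>- e/2\<bar> < e" using e by simp
    note zc = Dset_c[OF pert[OF this p] j0]
    have "(x + (- e/2) *\<^sub>R axis (L!p) 1) $ j0 \<le> (x + (- e/2) *\<^sub>R axis (L!p) 1) $ (L!p)" using zc p by blast
    moreover have "L!p \<noteq> j0" using p j0 by auto
    ultimately show "?c < x$(L!p)" unfolding comp using e by simp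
  next
    have "\<bar>e/2\<bar> < e" using e by simp
    note zc = Dset_c[OF pert[OF this p] j0]
    have "(x + (e/2) *\<^sub>R axis (L!p) 1) $ (L!p) \<le> (x + (e/2) *\<^sub>R axis (L!p) 1) $ j0 + 1" using zc p by blast
    moreover have "L!p \<noteq> j0" using p j0 by auto
    ultimately show "x$(L!p) < ?c + 1" unfolding comp using e by simp
  qed
  have s2: "x$(L!q) < x$(L!p)" if pq: "p < q" "q < length L" for p q
  proof -
    have "\<bar>e/2\<bar> < e" using e by simp
    note zc = Dset_c[OF pert[OF this pq(2)] j0]
    have "(x + (e/2) *\<^sub>R axis (L!q) 1) $ (L!q) \<le> (x + (e/2) *\<^sub>R axis (L!q) 1) $ (L!p)" using zc pq by blast
    moreover have "L!p \<noteq> L!q" using pq d by (simp add: nth_eq_iff_index_eq)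
    ultimately show ?thesis unfolding comp using e by simp
  qed
  have "strictP L x ?c" unfolding strictP_def using xc s1 s2 by blast
  then show ?thesis by blast
qed

lemma aff_dim_D:
  fixes L :: "'e::finite list"
  assumes d: "distinct L" and nu: "set L \<noteq> UNIV"
  shows "aff_dim (Dset L) = int (length L + 1)"
proof -
  obtain j0 where j0: "j0 \<notin> set L" using nu by auto
  let ?W = "insert (oneout L) ((\<lambda>a. axis a (1::real)) ` set L)"
  have WD: "?W \<subseteq> span (Dset L)"
  proof
    fix w assume "w \<in> ?W"
    then show "w \<in> span (Dset L)"
    proof
      assume "w = oneout L" then show ?thesis using oneout_span[OF d] by simp
    next
      assume "w \<in> (\<lambda>a. axis a 1) ` set L"
      then obtain p where "p < length L" "w = axis (L!p) 1" by (auto simp: in_set_conv_nth)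
      then show ?thesis using axis_span[OF d] by simp
    qed
  qed
  have DW: "Dset L \<subseteq> span ?W"
  proof
    fix x assume x: "x \<in> Dset L"
    note xc = Dset_c[OF x j0]
    have eq: "x = x$j0 *\<^sub>R oneout L + (\<Sum>a\<in>set L. x$a *\<^sub>R axis a 1)"
      unfolding vec_eq_iff
    proof
      fix i
      have s: "(\<Sum>a\<in>set L. x$a *\<^sub>R axis a (1::real)) $ i = (if i \<in> set L then x$i else 0)"
      proof -
        have "(\<Sum>a\<in>set L. x$a *\<^sub>R axis a (1::real)) $ i = (\<Sum>a\<in>set L. x$a * (if i = a then 1 else 0))"
          by (simp add: axis_def)
        also have "\<dots> = (\<Sum>a\<in>set L. if a = i then x$i else 0)" by (rule sum.cong) auto
        also have "\<dots> = (if i \<in> set L then x$i else 0)" by (simp add: sum.delta)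
        finally show ?thesis .
      qed
      show "x$i = (x$j0 *\<^sub>R oneout L + (\<Sum>a\<in>set L. x$a *\<^sub>R axis a 1)) $ i"
        using xc unfolding vector_add_component s by (auto simp: oneout_def)
    qed
    have "x$j0 *\<^sub>R oneout L \<in> span ?W" by (intro span_mul span_base) simp
    moreover have "(\<Sum>a\<in>set L. x$a *\<^sub>R axis a 1) \<in> span ?W"
      by (intro span_sum span_mul span_base) simp
    ultimately show "x \<in> span ?W" using eq by (metis span_add)
  qed
  have spEq: "span (Dset L) = span ?W"
  proof
    show "span (Dset L) \<subseteq> span ?W" using DW by (simp add: span_minimal)
    show "span ?W \<subseteq> span (Dset L)" using WD by (simp add: span_minimal)
  qed
  have orth: "pairwise orthogonal ?W"
    unfolding pairwise_def orthogonal_def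
  proof (intro ballI impI)
    fix v w assume v: "v \<in> ?W" and w: "w \<in> ?W" and vw: "v \<noteq> w"
    have ia: "oneout L \<bullet> axis a 1 = 0" if "a \<in> set L" for a
      using that by (simp add: inner_axis oneout_def)
    show "v \<bullet> w = 0"
    proof (cases "v = oneout L")
      case True
      then have "w \<in> (\<lambda>a. axis a 1) ` set L" using w vw by blast
      then show ?thesis using True ia by auto
    next
      case False
      then obtain a where a: "a \<in> set L" "v = axis a 1" using v by blast
      show ?thesis
      proof (cases "w = oneout L")
        case True then show ?thesis using a ia by (simp add: inner_commute)
      next
        case False
        then obtain b where b: "b \<in> set L" "w = axis b 1" using w by blast
        then have "a \<noteq> b" using a vw by blast
        then show ?thesis using a b by (simp add: inner_axis_axis)
      qed
    qed
  qed
  have n0: "0 \<notin> ?W"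
  proof
    assume "0 \<in> ?W"
    then show False
    proof
      assume "0 = oneout L"
      then have "(0::real^'e) $ j0 = oneout L $ j0" by simp
      then show False using j0 by (simp add: oneout_def)
    next
      assume "0 \<in> (\<lambda>a. axis a (1::real)) ` set L"
      then obtain a where "(0::real^'e) = axis a 1" by blast
      then have "(0::real^'e) $ a = axis a 1 $ a" by simp
      then show False by simp
    qed
  qed
  have ind: "independent ?W" by (rule pairwise_orthogonal_independent[OF orth n0])
  have nin: "oneout L \<notin> (\<lambda>a. axis a (1::real)) ` set L"
  proof
    assume "oneout L \<in> (\<lambda>a. axis a (1::real)) ` set L"
    then obtain a where a: "a \<in> set L" "oneout L = axis a 1" by blast
    then have "oneout L $ a = axis a (1::real) $ a" by simp
    then show False using a by (simp add: oneout_def)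
  qed
  have inj: "inj_on (\<lambda>a. axis a (1::real)) (set L)"
    by (rule inj_onI) (simp add: axis_eq_axis)
  have cW: "card ?W = length L + 1"
    using nin inj d by (simp add: card_image distinct_card)
  have "aff_dim (Dset L) = int (dim (Dset L))"
    by (rule aff_dim_zero) (simp add: hull_inc zero_D)
  also have "dim (Dset L) = dim (span (Dset L))" by (simp add: dim_span)
  also have "\<dots> = dim (span ?W)" using spEq by simp
  also have "\<dots> = card ?W" by (rule dim_span_eq_card_independent[OF ind])
  finally show ?thesis using cW by simp
qed

lemma strict_type_a:
  fixes L :: "'e::finite list"
  assumes s: "strictP L x c" and B: "B \<noteq> {}" and d: "distinct L" and p: "p < length L"
  shows "am x B (L!p) \<longleftrightarrow> L!p \<in> B \<and> (\<forall>a\<in>set (take p L). a \<notin> B)"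
proof -
  have ch: "am x B (L!p) \<longleftrightarrow> L!p \<in> B \<and> (\<forall>i\<in>B. x$i \<le> x$(L!p))"
    using am_char[OF _ B] strict_bounds[OF s] by blast
  have "(\<forall>i\<in>B. x$i \<le> x$(L!p)) \<longleftrightarrow> (\<forall>a\<in>set (take p L). a \<notin> B)"
  proof
    assume h: "\<forall>i\<in>B. x$i \<le> x$(L!p)"
    show "\<forall>a\<in>set (take p L). a \<notin> B"
    proof (intro ballI notI)
      fix a assume a: "a \<in> set (take p L)" "a \<in> B"
      then have "a \<in> set L" by (meson in_set_takeD)
      then obtain q where q: "q < length L" "a = L!q" by (auto simp: in_set_conv_nth)
      then have "q < p" using in_take_iff[OF d q(1)] a by simp
      then have "x$(L!p) < x$(L!q)" using s p unfolding strictP_def by blast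
      then show False using h a q by force
    qed
  next
    assume h: "\<forall>a\<in>set (take p L). a \<notin> B"
    show "\<forall>i\<in>B. x$i \<le> x$(L!p)"
    proof
      fix i assume i: "i \<in> B"
      show "x$i \<le> x$(L!p)"
      proof (cases "i \<in> set L")
        case True
        then obtain q where q: "q < length L" "i = L!q" by (auto simp: in_set_conv_nth)
        have "\<not> q < p" using in_take_iff[OF d q(1), of p] h i q by blast
        then have "p = q \<or> p < q" by linarith
        then show ?thesis
        proof
          assume "p = q" then show ?thesis using q by simp
        next
          assume "p < q" then have "x$(L!q) < x$(L!p)" using s q unfolding strictP_def by blast
          then show ?thesis using q by simp
        qed
      next
        case False
        then have "x$i = c" using s unfolding strictP_def by blast
        then show ?thesis using s p unfolding strictP_def by force
      qed
    qed
  qed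
  then show ?thesis using ch by blast
qed

lemma strict_type_b:
  fixes L :: "'e::finite list"
  assumes s: "strictP L x c" and B: "B \<noteq> {}" and j: "j \<notin> set L"
  shows "am x B j \<longleftrightarrow> j \<in> B \<and> (\<forall>a\<in>set L. a \<notin> B)"
proof -
  have ch: "am x B j \<longleftrightarrow> j \<in> B \<and> (\<forall>i\<in>B. x$i \<le> x$j)"
    using am_char[OF _ B] strict_bounds[OF s] by blast
  have xj: "x$j = c" using s j unfolding strictP_def by blast
  have "(\<forall>i\<in>B. x$i \<le> x$j) \<longleftrightarrow> (\<forall>a\<in>set L. a \<notin> B)"
  proof
    assume h: "\<forall>i\<in>B. x$i \<le> x$j"
    show "\<forall>a\<in>set L. a \<notin> B"
    proof (intro ballI notI)
      fix a assume a: "a \<in> set L" "a \<in> B"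
      then obtain q where q: "q < length L" "a = L!q" by (auto simp: in_set_conv_nth)
      then have "c < x$a" using s unfolding strictP_def by blast
      then show False using h a xj by force
    qed
  next
    assume h: "\<forall>a\<in>set L. a \<notin> B"
    show "\<forall>i\<in>B. x$i \<le> x$j"
    proof
      fix i assume "i \<in> B" then have "i \<notin> set L" using h by blast
      then show "x$i \<le> x$j" using s xj unfolding strictP_def by simp
    qed
  qed
  then show ?thesis using ch by blast
qed

lemma am_zero:
  assumes "B \<noteq> {}"
  shows "am (0::real^'e::finite) B m \<longleftrightarrow> m \<in> B"
  using am_char[of 0 "0::real^'e", OF _ assms] by simp

theorem mainTheorem8:
  fixes Vs :: "'v set" and ends :: "'e::finite \<Rightarrow> 'v set"
    and n k :: nat and Bs :: "nat \<Rightarrow> 'e set"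
  assumes "simple_graph Vs ends"
    and "graph_connected Vs ends"
    and "\<forall>e. \<not> is_bridge Vs ends e"
    and "bij_betw Bs {1..n} {B. spanning_tree Vs ends B}"
    and "\<forall>l\<in>{1..n}. card (Bs l) = k"
  defines "v \<equiv> (\<lambda>l. neg_ind (Bs l))"
    and "valid \<equiv> (\<lambda>is. distinct is \<and> length is = CARD('e) - k
                        \<and> spanning_tree Vs ends (UNIV - set is))"
    and "cellOf \<equiv> (\<lambda>is. tconv (insert 0 {tpt (take j is) | j. j \<in> {1..length is}}))"
  shows "(\<forall>C\<in>max_bounded_cells n v. tdim C = int (CARD('e)) - int k)
       \<and> max_bounded_cells n v = {cellOf is | is. valid is}
       \<and> (\<forall>is. valid is \<longrightarrow>
            (\<exists>l\<in>{1..n}. Bs l = UNIV - set is \<and> tpt is = v l)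
          \<and> (\<forall>x\<in>rel_interior (cellOf is).
               (\<forall>p<length is. ttype n v x (is ! p)
                   = ttype n v 0 (is ! p) - \<Union> (ttype n v 0 ` set (take p is)))
             \<and> (\<forall>j. j \<notin> set is \<longrightarrow>
                   ttype n v x j = ttype n v 0 j - \<Union> (ttype n v 0 ` set is))))"
proof -
  interpret grph Vs ends using assms(1-3) by unfold_locales
  define BB where "BB = {B. spanning_tree Vs ends B}"
  have img: "Bs ` {1..n} = BB" using assms(4) unfolding bij_betw_def BB_def by blast
  have BBl: "B \<in> BB \<longleftrightarrow> (\<exists>l\<in>{1..n}. Bs l = B)" for B using img by blast
  have cardk: "card B = k" if "B \<in> BB" for B using BBl[of B] that assms(5) by blast
  have Bsne: "Bs l \<noteq> {}" if l: "l \<in> {1..n}" for l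
  proof -
    have "Bs l \<in> BB" using img l by blast
    then have "spanning_tree Vs ends (Bs l)" unfolding BB_def by simp
    then show ?thesis by (rule tree_nonempty)
  qed
  have BBi: "B \<in> BB \<longleftrightarrow> spanning_tree Vs ends B" for B unfolding BB_def by simp
  interpret trop BB
  proof
    obtain B where "spanning_tree Vs ends B" using tree_exists by blast
    then show "BB \<noteq> {}" using BBi by blast
  next
    fix B assume "B \<in> BB"
    then show "B \<noteq> {}" using tree_nonempty BBi by blast
  next
    fix B assume "B \<in> BB"
    then show "B \<noteq> UNIV" using tree_not_univ BBi by blast
  next
    fix B B' assume "B \<in> BB" "B' \<in> BB"
    then show "card B = card B'" using cardk by presburger
  next
    fix B0 and a b :: 'e assume B0: "B0 \<in> BB" and ab: "a \<noteq> b"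
    obtain B where "spanning_tree Vs ends B" "a \<in> B" "b \<in> B" "B \<subseteq> B0 \<union> {a, b}"
      using tree_pair[OF BBi[THEN iffD1, OF B0] ab] by blast
    then show "\<exists>B\<in>BB. a \<in> B \<and> b \<in> B \<and> B \<subseteq> B0 \<union> {a, b}" using BBi by blast
  qed
  have tt: "ttype n v x m = {l\<in>{1..n}. am x (Bs l) m}" for x m
    unfolding v_def by (rule ttype_am)
  have teq: "{x. ttype n v x = ttype n v x0} = {x. \<forall>B\<in>BB. \<forall>m. am x B m = am x0 B m}" for x0
  proof -
    have "ttype n v x = ttype n v x0 \<longleftrightarrow> (\<forall>B\<in>BB. \<forall>m. am x B m = am x0 B m)" for x
    proof
      assume h: "ttype n v x = ttype n v x0"
      show "\<forall>B\<in>BB. \<forall>m. am x B m = am x0 B m"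
      proof (intro ballI allI)
        fix B m assume "B \<in> BB"
        then obtain l where l: "l \<in> {1..n}" "Bs l = B" using BBl by blast
        have "ttype n v x m = ttype n v x0 m" using h by (rule fun_cong)
        then have "{l\<in>{1..n}. am x (Bs l) m} = {l\<in>{1..n}. am x0 (Bs l) m}"
          unfolding tt .
        then have "(l \<in> {l\<in>{1..n}. am x (Bs l) m}) = (l \<in> {l\<in>{1..n}. am x0 (Bs l) m})"
          by (rule arg_cong)
        then show "am x B m = am x0 B m" using l by simp
      qed
    next
      assume h: "\<forall>B\<in>BB. \<forall>m. am x B m = am x0 B m"
      have "ttype n v x m = ttype n v x0 m" for m
        unfolding tt using h img by blast
      then show "ttype n v x = ttype n v x0" by blast
    qed
    then show ?thesis by blast
  qed
  have tcells_eq: "tcells n v = range (cellP BB)"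
  proof -
    have "closure {x. ttype n v x = ttype n v x0} = cellP BB x0" for x0
      unfolding teq by (rule closure_cell)
    then show ?thesis unfolding tcells_def by auto
  qed
  have bc_eq: "bounded_cells n v = {C \<in> range (cellP BB). tbounded C}"
    unfolding bounded_cells_def tcells_eq by simp
  have validL_cell: "Dset L = cellP BB (xst L)" if "validL L" for L
    using Dset_eq[OF that] .
  have D_bc: "Dset L \<in> bounded_cells n v" if "validL L" for L
    unfolding bc_eq using validL_cell[OF that] bounded_D[of "L"] by auto
  have bc_D: "\<exists>L. validL L \<and> C \<subseteq> Dset L" if Cb0: "C \<in> bounded_cells n v" for C
  proof -
    obtain x0 where C: "C = cellP BB x0" "tbounded (cellP BB x0)" using Cb0 unfolding bc_eq by blast
    obtain L where v: "validL L" "x0 \<in> Dset L" using am_to_D bounded_am[OF C(2)] by blast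
    have "cellP BB x0 \<subseteq> cellP BB (xst L)"
      using v validL_cell[OF v(1)] unfolding cellP_def by blast
    then show ?thesis using C v validL_cell[OF v(1)] by blast
  qed
  have mbc: "max_bounded_cells n v = {Dset L | L. validL L}"
  proof
    show "max_bounded_cells n v \<subseteq> {Dset L | L. validL L}"
    proof
      fix C assume C: "C \<in> max_bounded_cells n v"
      then have Cb: "C \<in> bounded_cells n v" unfolding max_bounded_cells_def by blast
      obtain L where "validL L" "C \<subseteq> Dset L" using bc_D[OF Cb] by blast
      then have "Dset L = C" using C D_bc unfolding max_bounded_cells_def by blast
      then show "C \<in> {Dset L | L. validL L}" using \<open>validL L\<close> by blast
    qed
  next
    show "{Dset L | L. validL L} \<subseteq> max_bounded_cells n v"
    proof
      fix C assume "C \<in> {Dset L | L. validL L}"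
      then obtain L where C: "C = Dset L" "validL L" by blast
      have "\<forall>C'\<in>bounded_cells n v. C \<subseteq> C' \<longrightarrow> C' = C"
      proof (intro ballI impI)
        fix C' assume C': "C' \<in> bounded_cells n v" "C \<subseteq> C'"
        obtain L' where L': "validL L'" "C' \<subseteq> Dset L'" using bc_D[OF C'(1)] by blast
        then have "L = L'" using D_unique[OF C(2) L'(1)] C C' by blast
        then show "C' = C" using C C' L' by blast
      qed
      then show "C \<in> max_bounded_cells n v" unfolding max_bounded_cells_def using D_bc C by blast
    qed
  qed
  have valid_iff: "valid L \<longleftrightarrow> validL L" for L
  proof
    assume "valid L" then show "validL L" unfolding valid_def validL_def unfolding BB_def by blast
  next
    assume h: "validL L"
    then have d: "distinct L" and B: "UNIV - set L \<in> BB" unfolding validL_def by blast+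
    have "card (UNIV - set L) = CARD('e) - card (set L)" by (simp add: card_Diff_subset)
    then have "length L = CARD('e) - k" using cardk[OF B] d distinct_card[OF d]
      by (metis card_mono diff_diff_cancel finite subset_UNIV)
    then show "valid L" using d B unfolding valid_def BB_def by blast
  qed
  have cell_eq: "cellOf L = Dset L" if "validL L" for L
  proof -
    have d: "distinct L" and B: "UNIV - set L \<in> BB" using that unfolding validL_def by blast+
    have nu: "set L \<noteq> UNIV" using Bne[OF B] by blast
    have ne: "L \<noteq> []" using Bnu[OF B] by auto
    have "cellOf L = tconv (Vset L)" unfolding cellOf_def Vset_def by simp
    then show ?thesis using tconv_sub_D[OF d nu] D_sub_tconv[OF d ne] by blast
  qed
  show ?thesis
  proof (intro conjI)
    show "\<forall>C\<in>max_bounded_cells n v. tdim C = int CARD('e) - int k"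
    proof
      fix C assume "C \<in> max_bounded_cells n v"
      then obtain L where C: "C = Dset L" "validL L" using mbc by blast
      have d: "distinct L" and B: "UNIV - set L \<in> BB" using C unfolding validL_def by blast+
      have nu: "set L \<noteq> UNIV" using Bne[OF B] by blast
      have len: "length L = CARD('e) - k" using valid_iff[of "L"] C unfolding valid_def by blast
      have "k \<le> CARD('e)" using cardk[OF B] by (metis card_mono finite subset_UNIV)
      then show "tdim C = int CARD('e) - int k"
        unfolding tdim_def C aff_dim_D[OF d nu] len by simp
    qed
  next
    show "max_bounded_cells n v = {cellOf L | L. valid L}"
      unfolding mbc
    proof (rule set_eqI)
      fix C
      show "C \<in> {Dset L | L. validL L} \<longleftrightarrow> C \<in> {cellOf L | L. valid L}"
      proof
        assume "C \<in> {Dset L | L. validL L}"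
        then obtain L where "C = Dset L" "validL L" by blast
        then have "C = cellOf L" "valid L" using cell_eq valid_iff by simp_all
        then show "C \<in> {cellOf L | L. valid L}" by blast
      next
        assume "C \<in> {cellOf L | L. valid L}"
        then obtain L where "C = cellOf L" "valid L" by blast
        then have "C = Dset L" "validL L" using cell_eq valid_iff by simp_all
        then show "C \<in> {Dset L | L. validL L}" by blast
      qed
    qed
  next
    show "\<forall>L. valid L \<longrightarrow>
            (\<exists>l\<in>{1..n}. Bs l = UNIV - set L \<and> tpt L = v l)
          \<and> (\<forall>x\<in>rel_interior (cellOf L).
               (\<forall>p<length L. ttype n v x (L ! p)
                   = ttype n v 0 (L ! p) - \<Union> (ttype n v 0 ` set (take p L)))
             \<and> (\<forall>j. j \<notin> set L \<longrightarrow>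
                   ttype n v x j = ttype n v 0 j - \<Union> (ttype n v 0 ` set L)))"
    proof (rule allI, rule impI, intro conjI ballI)
      fix L assume "valid L"
      then have vl: "validL L" using valid_iff by blast
      have d: "distinct L" and B: "UNIV - set L \<in> BB" using vl unfolding validL_def by blast+
      have nu: "set L \<noteq> UNIV" using Bne[OF B] by blast
      show "\<exists>l\<in>{1..n}. Bs l = UNIV - set L \<and> tpt L = v l"
        using BBl[of "UNIV - set L"] B unfolding v_def tpt_def by auto
      have t0: "ttype n v 0 m = {l\<in>{1..n}. m \<in> Bs l}" for m
        unfolding tt
      proof (rule Collect_cong)
        fix l show "(l \<in> {1..n} \<and> am 0 (Bs l) m) = (l \<in> {1..n} \<and> m \<in> Bs l)"
          proof (cases "l \<in> {1..n}")
            case True then show ?thesis using am_zero[OF Bsne[OF True]] by simp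
          next
            case False then show ?thesis by blast
          qed
      qed
      fix x assume "x \<in> rel_interior (cellOf L)"
      then have "x \<in> rel_interior (Dset L)" using cell_eq[OF vl] by simp
      then obtain c where s: "strictP L x c" using relint_strict[OF d nu] by blast
      show "\<forall>p<length L. ttype n v x (L ! p)
                   = ttype n v 0 (L ! p) - \<Union> (ttype n v 0 ` set (take p L))"
      proof (intro allI impI)
        fix p assume p: "p < length L"
        have "ttype n v x (L!p) = {l\<in>{1..n}. L!p \<in> Bs l \<and> (\<forall>a\<in>set (take p L). a \<notin> Bs l)}"
          unfolding tt
        proof (rule Collect_cong)
          fix l show "(l \<in> {1..n} \<and> am x (Bs l) (L!p)) = (l \<in> {1..n} \<and> L!p \<in> Bs l \<and> (\<forall>a\<in>set (take p L). a \<notin> Bs l))"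
            proof (cases "l \<in> {1..n}")
            case True then show ?thesis using strict_type_a[OF s Bsne[OF True] d p] by simp
          next
            case False then show ?thesis by blast
          qed
        qed
        then show "ttype n v x (L ! p) = ttype n v 0 (L ! p) - \<Union> (ttype n v 0 ` set (take p L))"
          unfolding t0 by (auto simp: set_eq_iff)
      qed
      show "\<forall>j. j \<notin> set L \<longrightarrow> ttype n v x j = ttype n v 0 j - \<Union> (ttype n v 0 ` set L)"
      proof (intro allI impI)
        fix j assume j: "j \<notin> set L"
        have "ttype n v x j = {l\<in>{1..n}. j \<in> Bs l \<and> (\<forall>a\<in>set L. a \<notin> Bs l)}"
          unfolding tt
        proof (rule Collect_cong)
          fix l show "(l \<in> {1..n} \<and> am x (Bs l) j) = (l \<in> {1..n} \<and> j \<in> Bs l \<and> (\<forall>a\<in>set L. a \<notin> Bs l))"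
            proof (cases "l \<in> {1..n}")
            case True then show ?thesis using strict_type_b[OF s Bsne[OF True] j] by simp
          next
            case False then show ?thesis by blast
          qed
        qed
        then show "ttype n v x j = ttype n v 0 j - \<Union> (ttype n v 0 ` set L)"
          unfolding t0 by (auto simp: set_eq_iff)
      qed
    qed
  qed
qed

end
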